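(* Let $(S,\mathcal{E}^Q)$ be a quantitative evidence frame with $\mathcal{E}^Q=\{(E_1,p_1),\dots,(E_m,p_m)\}$, $p_j\in(0,1)$ for all $j$. Let $d:2^{\mathcal{E}}\to\tau_{\mathcal{E}}$ be given by $d(\emptyset)=S$ and, for nonempty $\mathbf{E}\subseteq\mathcal{E}$, $d(\mathbf{E})$ the least (w.r.t. inclusion) element of $\tau_{\mathbf{E}}$ that is dense in $\bigcup\mathbf{E}$ w.r.t. $\tau_{\mathbf{E}}$ (such a least element exists). Let $\mathcal{J}_{SD}$ be the set of all $D\in\tau_{\mathcal{E}}$ such that $D\cap T\neq\emptyset$ for all nonempty $T\in\tau_{\mathcal{E}}$. Let $B:2^S\to\{0,1\}$ be defined by $B(P)=1$ iff there exists $D\in\tau_{\mathcal{E}}$ with $D\subseteq P$ and $D\cap T\neq\emptyset$ for all $T\in\tau_{\mathcal{E}}\setminus\{\emptyset\}$. Then for every $P\subseteq S$: $B(P)=1$ if and only if $\mathrm{Bel}_{\mathcal{J}_{SD}}(d,P)>0$.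
   Context: A quantitative evidence frame is a pair $(S,\mathcal{E}^Q)$ where $S$ is a finite nonempty set and $\mathcal{E}^Q=\{(E_1,p_1),\dots,(E_m,p_m)\}$ with $E_1,\dots,E_m$ distinct, $p_j\in(0,1)$, and $\mathcal{E}=\{E_1,\dots,E_m\}$ a nonempty family of subsets of $S$ with $\emptyset\notin\mathcal{E}$, $S\notin\mathcal{E}$. For $\mathbf{E}\subseteq 2^S$, $\tau_{\mathbf{E}}$ is the topology on $S$ generated by $\mathbf{E}$: $\emptyset$, $S$, all finite intersections of members of $\mathbf{E}$, and all unions of such. For $\mathbf{E}\subseteq\mathcal{E}$, $D\in\tau_{\mathbf{E}}$ is dense in $\bigcup\mathbf{E}$ w.r.t. $\tau_{\mathbf{E}}$ if $D\cap T\neq\emptyset$ for all nonempty $T\in\tau_{\mathbf{E}}$. Define $\delta(\mathbf{E})=\prod_{E_j\in\mathbf{E}}p_j\prod_{E_j\notin\mathbf{E}}(1-p_j)$ for $\mathbf{E}\subseteq\mathcal{E}$; for $f:2^{\mathcal{E}}\to\tau_{\mathcal{E}}$, $\delta_\tau(f,T)=\sum_{\mathbf{E}\subseteq\mathcal{E}:\,f(\mathbf{E})=T}\delta(\mathbf{E})$ if $T\in\tau_{\mathcal{E}}$ and $0$ otherwise; for $\mathcal{J}\subseteq\tau_{\mathcal{E}}$, $\delta_{\mathcal{J}}(f,A)=\delta_\tau(f,A)/\sum_{T\in\mathcal{J}}\delta_\tau(f,T)$ if $A\in\mathcal{J}$ and $0$ otherwise; $\mathrm{Bel}_{\mathcal{J}}(f,P)=\sum_{A\subseteq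 P}\delta_{\mathcal{J}}(f,A)$. *)

theory Defs
  imports Main "HOL.Real"
begin

definition gen_top :: "'a set \<Rightarrow> 'a set set \<Rightarrow> 'a set set" where
  "gen_top S Es = {S} \<union>
     {U. \<exists>F. F \<subseteq> {\<Inter>G | G. G \<subseteq> Es \<and> finite G \<and> G \<noteq> {}} \<and> U = \<Union>F}"

definition dense_in_union :: "'a set \<Rightarrow> 'a set set \<Rightarrow> 'a set \<Rightarrow> bool" where
  "dense_in_union S Es D \<longleftrightarrow> D \<in> gen_top S Es \<and>
     (\<forall>T\<in>gen_top S Es. T \<noteq> {} \<longrightarrow> D \<inter> T \<noteq> {})"

definition dmap :: "'a set \<Rightarrow> 'a set set \<Rightarrow> 'a set" where
  "dmap S Es = (if Es = {} then S else (LEAST D. dense_in_union S Es D))"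

definition delta :: "'a set set \<Rightarrow> ('a set \<Rightarrow> real) \<Rightarrow> 'a set set \<Rightarrow> real" where
  "delta \<E> p Es = (\<Prod>e\<in>Es. p e) * (\<Prod>e\<in>\<E> - Es. 1 - p e)"

definition delta_tau :: "'a set \<Rightarrow> 'a set set \<Rightarrow> ('a set \<Rightarrow> real)
    \<Rightarrow> ('a set set \<Rightarrow> 'a set) \<Rightarrow> 'a set \<Rightarrow> real" where
  "delta_tau S \<E> p f T = (if T \<in> gen_top S \<E>
     then (\<Sum>Es\<in>{Es. Es \<subseteq> \<E> \<and> f Es = T}. delta \<E> p Es) else 0)"

definition delta_J :: "'a set \<Rightarrow> 'a set set \<Rightarrow> ('a set \<Rightarrow> real) \<Rightarrow> 'a set set
    \<Rightarrow> ('a set set \<Rightarrow> 'a set) \<Rightarrow> 'a set \<Rightarrow> real" where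
  "delta_J S \<E> p J f A = (if A \<in> J
     then delta_tau S \<E> p f A / (\<Sum>T\<in>J. delta_tau S \<E> p f T) else 0)"

definition Bel :: "'a set \<Rightarrow> 'a set set \<Rightarrow> ('a set \<Rightarrow> real) \<Rightarrow> 'a set set
    \<Rightarrow> ('a set set \<Rightarrow> 'a set) \<Rightarrow> 'a set \<Rightarrow> real" where
  "Bel S \<E> p J f P = (\<Sum>A\<in>Pow P. delta_J S \<E> p J f A)"

definition J_SD :: "'a set \<Rightarrow> 'a set set \<Rightarrow> 'a set set" where
  "J_SD S \<E> = {D \<in> gen_top S \<E>. \<forall>T\<in>gen_top S \<E>. T \<noteq> {} \<longrightarrow> D \<inter> T \<noteq> {}}"

definition Bfun :: "'a set \<Rightarrow> 'a set set \<Rightarrow> 'a set \<Rightarrow> nat" where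
  "Bfun S \<E> P = (if \<exists>D\<in>gen_top S \<E>. D \<subseteq> P \<and>
      (\<forall>T\<in>gen_top S \<E> - {{}}. D \<inter> T \<noteq> {}) then 1 else 0)"

end

theory Submission
  imports Defs
begin

lemma gen_top_sub:
  assumes "E \<subseteq> Pow S" "U \<in> gen_top S E" shows "U \<subseteq> S"
  using assms unfolding gen_top_def by blast

lemma gen_top_Int:
  assumes E: "E \<subseteq> Pow S" and U: "U \<in> gen_top S E" and V: "V \<in> gen_top S E"
  shows "U \<inter> V \<in> gen_top S E"
proof -
  have Us: "U \<subseteq> S" "V \<subseteq> S" using gen_top_sub[OF E] U V by auto
  show ?thesis
  proof (cases "U = S \<or> V = S")
    case True
    then show ?thesis
    proof
      assume "U = S" then have "U \<inter> V = V" using Us by blast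
      then show ?thesis using V by simp
    next
      assume "V = S" then have "U \<inter> V = U" using Us by blast
      then show ?thesis using U by simp
    qed
  next
    case False
    let ?B = "{\<Inter>G | G. G \<subseteq> E \<and> finite G \<and> G \<noteq> {}}"
    from False U obtain F1 where F1: "F1 \<subseteq> ?B" "U = \<Union>F1" unfolding gen_top_def by blast
    from False V obtain F2 where F2: "F2 \<subseteq> ?B" "V = \<Union>F2" unfolding gen_top_def by blast
    let ?F = "{a \<inter> b | a b. a \<in> F1 \<and> b \<in> F2}"
    have "?F \<subseteq> ?B"
    proof
      fix x assume "x \<in> ?F"
      then obtain a b where ab: "x = a \<inter> b" "a \<in> F1" "b \<in> F2" by blast
      obtain G1 where G1: "a = \<Inter>G1" "G1 \<subseteq> E" "finite G1" "G1 \<noteq> {}" using ab F1 by blast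
      obtain G2 where G2: "b = \<Inter>G2" "G2 \<subseteq> E" "finite G2" "G2 \<noteq> {}" using ab F2 by blast
      have "x = \<Inter>(G1 \<union> G2)" using ab G1 G2 by auto
      then show "x \<in> ?B" using G1 G2 by blast
    qed
    moreover have "U \<inter> V = \<Union>?F" using F1 F2 by blast
    ultimately show ?thesis unfolding gen_top_def by blast
  qed
qed

lemma dense_Int:
  assumes E: "E \<subseteq> Pow S" and d1: "dense_in_union S E D1" and d2: "dense_in_union S E D2"
  shows "dense_in_union S E (D1 \<inter> D2)"
proof -
  have o1: "D1 \<in> gen_top S E" and n1: "\<forall>T\<in>gen_top S E. T \<noteq> {} \<longrightarrow> D1 \<inter> T \<noteq> {}"
    using d1 unfolding dense_in_union_def by simp_all
  have o2: "D2 \<in> gen_top S E" and n2: "\<forall>T\<in>gen_top S E. T \<noteq> {} \<longrightarrow> D2 \<inter> T \<noteq> {}"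
    using d2 unfolding dense_in_union_def by simp_all
  have o: "D1 \<inter> D2 \<in> gen_top S E" by (rule gen_top_Int[OF E o1 o2])
  have "D1 \<inter> D2 \<inter> T \<noteq> {}" if T: "T \<in> gen_top S E" "T \<noteq> {}" for T
  proof -
    have a: "D2 \<inter> T \<in> gen_top S E" by (rule gen_top_Int[OF E o2 T(1)])
    have b: "D2 \<inter> T \<noteq> {}" using n2 T by simp
    have "D1 \<inter> (D2 \<inter> T) \<noteq> {}" using n1 a b by simp
    then show ?thesis by (simp add: Int_assoc)
  qed
  then show ?thesis unfolding dense_in_union_def using o by simp
qed

lemma dense_least_ex:
  assumes S: "finite S" and E: "E \<subseteq> Pow S"
  shows "\<exists>D. dense_in_union S E D \<and> (\<forall>D'. dense_in_union S E D' \<longrightarrow> D \<subseteq> D')"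
proof -
  have "dense_in_union S E S"
  proof -
    have "S \<in> gen_top S E" unfolding gen_top_def by simp
    moreover have "S \<inter> T \<noteq> {}" if "T \<in> gen_top S E" "T \<noteq> {}" for T
    proof -
      have "T \<subseteq> S" by (rule gen_top_sub[OF E that(1)])
      then have "S \<inter> T = T" by blast
      then show ?thesis using that(2) by simp
    qed
    ultimately show ?thesis unfolding dense_in_union_def by simp
  qed
  then obtain D where D: "dense_in_union S E D"
    and m: "\<forall>D'. dense_in_union S E D' \<longrightarrow> card D \<le> card D'"
    using ex_has_least_nat[of "dense_in_union S E" S card] by blast
  have DS: "D \<subseteq> S" using D gen_top_sub[OF E] unfolding dense_in_union_def by blast
  have "D \<subseteq> D'" if "dense_in_union S E D'" for D'
  proof -
    have I: "dense_in_union S E (D \<inter> D')" using dense_Int[OF E D that] .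
    have "card D \<le> card (D \<inter> D')" using m I by blast
    moreover have "finite D" using DS S finite_subset by blast
    ultimately have "D \<inter> D' = D"
      by (metis Int_lower1 card_seteq)
    then show ?thesis by blast
  qed
  then show ?thesis using D by blast
qed

lemma dmap_least:
  assumes S: "finite S" and E: "E \<subseteq> Pow S" and ne: "E \<noteq> {}"
  shows "dense_in_union S E (dmap S E)" "\<And>D'. dense_in_union S E D' \<Longrightarrow> dmap S E \<subseteq> D'"
proof -
  obtain D where D: "dense_in_union S E D" "\<forall>D'. dense_in_union S E D' \<longrightarrow> D \<subseteq> D'"
    using dense_least_ex[OF S E] by blast
  have "(LEAST D. dense_in_union S E D) = D"
    by (rule Least_equality) (use D in auto)
  then have "dmap S E = D" unfolding dmap_def using ne by simp
  then show "dense_in_union S E (dmap S E)" "\<And>D'. dense_in_union S E D' \<Longrightarrow> dmap S E \<subseteq> D'"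
    using D by auto
qed

theorem proposition6:
  fixes S :: "'a set" and \<E> :: "'a set set" and p :: "'a set \<Rightarrow> real" and P :: "'a set"
  assumes "finite S" and "S \<noteq> {}"
    and "\<E> \<noteq> {}" and "\<E> \<subseteq> Pow S" and "{} \<notin> \<E>" and "S \<notin> \<E>"
    and "\<forall>e\<in>\<E>. 0 < p e \<and> p e < 1"
    and "P \<subseteq> S"
  shows "Bfun S \<E> P = 1 \<longleftrightarrow> Bel S \<E> p (J_SD S \<E>) (dmap S) P > 0"
proof -
  note S = assms(1) and E = assms(4) and ne = assms(3) and pp = assms(7)
  have finE: "finite \<E>" using S E by (meson finite_Pow_iff finite_subset)
  have Jeq: "J_SD S \<E> = {D. dense_in_union S \<E> D}"
    unfolding J_SD_def dense_in_union_def by auto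
  have finJ: "finite (J_SD S \<E>)"
  proof -
    have "J_SD S \<E> \<subseteq> Pow S" unfolding J_SD_def using gen_top_sub[OF E] by blast
    then show ?thesis using S by (meson finite_Pow_iff finite_subset)
  qed
  have dpos: "delta \<E> p Es > 0" if "Es \<subseteq> \<E>" for Es
  proof -
    have "(\<Prod>e\<in>Es. p e) > 0" using pp that by (intro prod_pos) auto
    moreover have "(\<Prod>e\<in>\<E> - Es. 1 - p e) > 0" using pp by (intro prod_pos) auto
    ultimately show ?thesis unfolding delta_def by simp
  qed
  have dtnn: "delta_tau S \<E> p (dmap S) T \<ge> 0" for T
    unfolding delta_tau_def
  proof (simp, intro impI sum_nonneg)
    fix Es assume "Es \<in> {Es. Es \<subseteq> \<E> \<and> dmap S Es = T}"
    then show "0 \<le> delta \<E> p Es" using dpos[of Es] by simp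
  qed
  define D0 where "D0 = dmap S \<E>"
  have D0d: "dense_in_union S \<E> D0" and D0l: "\<And>D'. dense_in_union S \<E> D' \<Longrightarrow> D0 \<subseteq> D'"
    using dmap_least[OF S E ne] unfolding D0_def by auto
  have D0J: "D0 \<in> J_SD S \<E>" using D0d Jeq by auto
  have D0pos: "delta_tau S \<E> p (dmap S) D0 > 0"
  proof -
    have fin: "finite {Es. Es \<subseteq> \<E> \<and> dmap S Es = D0}" using finE by simp
    have "delta \<E> p \<E> \<le> (\<Sum>Es\<in>{Es. Es \<subseteq> \<E> \<and> dmap S Es = D0}. delta \<E> p Es)"
    proof (rule member_le_sum)
      show "\<E> \<in> {Es. Es \<subseteq> \<E> \<and> dmap S Es = D0}" using D0_def by simp
      show "finite {Es. Es \<subseteq> \<E> \<and> dmap S Es = D0}" by (rule fin)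
      fix Es assume "Es \<in> {Es. Es \<subseteq> \<E> \<and> dmap S Es = D0} - {\<E>}"
      then show "0 \<le> delta \<E> p Es" using dpos[of Es] by simp
    qed
    moreover have "D0 \<in> gen_top S \<E>" using D0d unfolding dense_in_union_def by auto
    ultimately show ?thesis unfolding delta_tau_def using dpos[of \<E>] by auto
  qed
  define Z where "Z = (\<Sum>T\<in>J_SD S \<E>. delta_tau S \<E> p (dmap S) T)"
  have Zpos: "Z > 0"
  proof -
    have "delta_tau S \<E> p (dmap S) D0 \<le> Z" unfolding Z_def
      by (rule member_le_sum) (use D0J finJ dtnn in auto)
    then show ?thesis using D0pos by linarith
  qed
  have djnn: "delta_J S \<E> p (J_SD S \<E>) (dmap S) A \<ge> 0" for A
    unfolding delta_J_def using dtnn Zpos Z_def by auto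
  have finP: "finite (Pow P)" using S assms(8) by (meson finite_Pow_iff finite_subset)
  show ?thesis
  proof
    assume "Bfun S \<E> P = 1"
    then obtain D where D: "D \<in> gen_top S \<E>" "D \<subseteq> P"
      "\<forall>T\<in>gen_top S \<E> - {{}}. D \<inter> T \<noteq> {}"
      unfolding Bfun_def by (auto split: if_splits)
    have "dense_in_union S \<E> D" using D unfolding dense_in_union_def by auto
    then have "D0 \<subseteq> P" using D0l D by blast
    moreover have "delta_J S \<E> p (J_SD S \<E>) (dmap S) D0 > 0"
      unfolding delta_J_def using D0J D0pos Zpos Z_def by auto
    ultimately show "Bel S \<E> p (J_SD S \<E>) (dmap S) P > 0"
      unfolding Bel_def using finP djnn by (intro sum_pos2[of _ D0]) auto
  next
    assume "Bel S \<E> p (J_SD S \<E>) (dmap S) P > 0"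
    then obtain A where A: "A \<in> Pow P" "delta_J S \<E> p (J_SD S \<E>) (dmap S) A \<noteq> 0"
      unfolding Bel_def by (metis less_irrefl sum.neutral)
    then have "A \<in> J_SD S \<E>" unfolding delta_J_def by (auto split: if_splits)
    then have a1: "A \<in> gen_top S \<E>" and a2: "\<forall>T\<in>gen_top S \<E> - {{}}. A \<inter> T \<noteq> {}"
      unfolding J_SD_def by auto
    have "A \<subseteq> P" using A(1) by simp
    then have "\<exists>D\<in>gen_top S \<E>. D \<subseteq> P \<and> (\<forall>T\<in>gen_top S \<E> - {{}}. D \<inter> T \<noteq> {})"
      using a1 a2 by blast
    then show "Bfun S \<E> P = 1" unfolding Bfun_def by simp
  qed
qed

end
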